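(* Let $M$ be a closed three-dimensional manifold, $f\in\mathrm{Diff}^1(M)$, and $X$ a volume-expanding hyperbolic fixed point of $f$ of index $1$ for which there is an affine unfolding of the degenerate tangency $(f_t)_{|t|<\delta}$ of $f$ with respect to $X$. Then for every sufficiently small $\varepsilon>0$ there exists $0<\tau\le\varepsilon$ such that $f_\tau$ has a hyperbolic periodic point $Y$ of index $2$ and $f_\tau$ has a heterodimensional cycle associated to $X(f_\tau)$ and $Y$, i.e. $W^u(X(f_\tau))\cap W^s(\mathcal{O}(Y))\ne\emptyset$ and $W^s(X(f_\tau))\cap W^u(\mathcal{O}(Y))\ne\emptyset$.
   Context: Index is the dimension of the unstable manifold; $X$ is volume-expanding if $|\det df(X)|>1$. Affine unfolding: let $f\in\mathrm{Diff}^1(M)$ and $X$ a hyperbolic fixed point of index $1$ with a homoclinic tangency such that the eigenvalues of $df(X)$ are positive and distinct. A family $(f_t)_{|t|<\delta}$ is an affine unfolding of the degenerate tangency of $f$ with respect to $X$ if: (DT1) $f_0=f$; (DT2) there is a chart $\phi:U\to\mathbb{R}^3$ with $\phi(U)=(-1,1)^3$ and $\phi(X)=0$; (DT3) $F_t:=\phi\circ f_t\circ\phi^{-1}$ satisfies $F_t(x,y,z)=(\lambda x,\tilde\lambda y,\mu z)$ for $(x,y,z)\in(-1,1)\times(-1,1)\times(-\mu^{-1},\mu^{-1})$, where $0<\tilde\lambda<\lambda<1<\mu$ and $X,\lambda,\tilde\lambda,\mu$ do not depend on $t$; (DT4) there are $P,Q\in U$ with $\phi(P)=(0,0,p)$,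 $\phi(Q)=(0,q,0)$, $0<p,q<1$, and an integer $N\ge2$ with $f_0^N(P)=Q$ and $f_t^i(P)\notin U$ for $0<i<N$; (DT5) writing $F_t^N=\phi\circ f_t^N\circ\phi^{-1}$, there is a neighborhood $W_0$ of $P$ with $\phi(W_0)=[-\varepsilon_0,\varepsilon_0]\times[-\varepsilon_0,\varepsilon_0]\times[p-\varepsilon_0,p+\varepsilon_0]$ (some $\varepsilon_0>0$) and $F_t^N(\phi(W_0))\subset\phi(U)$ such that $F_t^N(x,y,z+p)=(az,by+q,cx+t)$ for all $(x,y,z+p)\in\phi(W_0)$, where $a,b,c$ are non-zero real numbers. *)

theory Defs
  imports "HOL-Analysis.Analysis"
begin

type_synonym R3 = "real ^ 3"

definition C1_on :: "R3 set \<Rightarrow> (R3 \<Rightarrow> R3) \<Rightarrow> bool" where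
  "C1_on S g \<longleftrightarrow> (\<exists>g'. (\<forall>x\<in>S. (g has_derivative blinfun_apply (g' x)) (at x))
                         \<and> continuous_on S g')"

definition is_chart :: "'m::topological_space set \<Rightarrow> ('m \<Rightarrow> R3) \<Rightarrow> bool" where
  "is_chart U \<phi> \<longleftrightarrow> open U \<and> inj_on \<phi> U \<and> open (\<phi> ` U) \<and> continuous_on U \<phi>
                    \<and> continuous_on (\<phi> ` U) (inv_into U \<phi>)"

definition C1_atlas :: "('m::topological_space set \<times> ('m \<Rightarrow> R3)) set \<Rightarrow> bool" where
  "C1_atlas A \<longleftrightarrow> (\<forall>(U,\<phi>)\<in>A. is_chart U \<phi>) \<and> (\<Union>(fst ` A) = UNIV)
     \<and> (\<forall>(U,\<phi>)\<in>A. \<forall>(V,\<psi>)\<in>A. C1_on (\<phi> ` (U \<inter> V)) (\<psi> \<circ> inv_into U \<phi>))"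

definition closed_3_manifold :: "('m::t2_space set \<times> ('m \<Rightarrow> R3)) set \<Rightarrow> bool" where
  "closed_3_manifold A \<longleftrightarrow> compact (UNIV :: 'm set) \<and> C1_atlas A"

definition compatible_chart ::
  "('m::topological_space set \<times> ('m \<Rightarrow> R3)) set \<Rightarrow> 'm set \<Rightarrow> ('m \<Rightarrow> R3) \<Rightarrow> bool" where
  "compatible_chart A U \<phi> \<longleftrightarrow> is_chart U \<phi> \<and>
     (\<forall>(V,\<psi>)\<in>A. C1_on (\<phi> ` (U \<inter> V)) (\<psi> \<circ> inv_into U \<phi>)
                \<and> C1_on (\<psi> ` (U \<inter> V)) (\<phi> \<circ> inv_into V \<psi>))"

definition C1_map :: "('m::topological_space set \<times> ('m \<Rightarrow> R3)) set \<Rightarrow> ('m \<Rightarrow> 'm) \<Rightarrow> bool" where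
  "C1_map A g \<longleftrightarrow> continuous_on UNIV g \<and>
     (\<forall>(U,\<phi>)\<in>A. \<forall>(V,\<psi>)\<in>A. C1_on (\<phi> ` (U \<inter> g -` V)) (\<psi> \<circ> g \<circ> inv_into U \<phi>))"

definition Diff1 :: "('m::topological_space set \<times> ('m \<Rightarrow> R3)) set \<Rightarrow> ('m \<Rightarrow> 'm) \<Rightarrow> bool" where
  "Diff1 A g \<longleftrightarrow> bij g \<and> C1_map A g \<and> C1_map A (inv g)"

definition deriv_at_fixed ::
  "('m::topological_space set \<times> ('m \<Rightarrow> R3)) set \<Rightarrow> ('m \<Rightarrow> 'm) \<Rightarrow> 'm \<Rightarrow> (R3 \<Rightarrow> R3) \<Rightarrow> bool" where
  "deriv_at_fixed A g x L \<longleftrightarrow> g x = x \<and>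
     (\<exists>(U,\<phi>)\<in>A. x \<in> U \<and> ((\<phi> \<circ> g \<circ> inv_into U \<phi>) has_derivative L) (at (\<phi> x)))"

definition cmatrix :: "(R3 \<Rightarrow> R3) \<Rightarrow> complex ^ 3 ^ 3" where
  "cmatrix L = (\<chi> i j. complex_of_real (matrix L $ i $ j))"

definition eigenvalue :: "(R3 \<Rightarrow> R3) \<Rightarrow> complex \<Rightarrow> bool" where
  "eigenvalue L c \<longleftrightarrow> det (mat c - cmatrix L) = 0"

definition hyperbolic_lin :: "(R3 \<Rightarrow> R3) \<Rightarrow> bool" where
  "hyperbolic_lin L \<longleftrightarrow> linear L \<and> det (matrix L) \<noteq> 0 \<and> (\<forall>c. eigenvalue L c \<longrightarrow> cmod c \<noteq> 1)"

definition unstable_subspace :: "(R3 \<Rightarrow> R3) \<Rightarrow> R3 set" where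
  "unstable_subspace L = {v. ((\<lambda>n. (inv L ^^ n) v) \<longlongrightarrow> 0) sequentially}"

definition hyperbolic_fixed_index ::
  "('m::topological_space set \<times> ('m \<Rightarrow> R3)) set \<Rightarrow> ('m \<Rightarrow> 'm) \<Rightarrow> 'm \<Rightarrow> nat \<Rightarrow> bool" where
  "hyperbolic_fixed_index A g x k \<longleftrightarrow>
     (\<exists>L. deriv_at_fixed A g x L \<and> hyperbolic_lin L \<and> dim (unstable_subspace L) = k)"

definition Ws_point :: "('m::topological_space \<Rightarrow> 'm) \<Rightarrow> 'm \<Rightarrow> 'm set" where
  "Ws_point g x = {z. ((\<lambda>n. (g ^^ n) z) \<longlongrightarrow> x) sequentially}"

definition Wu_point :: "('m::topological_space \<Rightarrow> 'm) \<Rightarrow> 'm \<Rightarrow> 'm set" where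
  "Wu_point g x = Ws_point (inv g) x"

definition orbit :: "('m \<Rightarrow> 'm) \<Rightarrow> 'm \<Rightarrow> 'm set" where
  "orbit g y = {(g ^^ n) y | n. True}"

text \<open>Stable / unstable set of the orbit of a periodic point y with g^k y = y.\<close>
definition Ws_orbit :: "('m::topological_space \<Rightarrow> 'm) \<Rightarrow> nat \<Rightarrow> 'm \<Rightarrow> 'm set" where
  "Ws_orbit g k y = (\<Union>w\<in>orbit g y. Ws_point (g ^^ k) w)"

definition Wu_orbit :: "('m::topological_space \<Rightarrow> 'm) \<Rightarrow> nat \<Rightarrow> 'm \<Rightarrow> 'm set" where
  "Wu_orbit g k y = (\<Union>w\<in>orbit g y. Wu_point (g ^^ k) w)"

end

theory Submission
  imports Defs
begin

definition cm :: "real^3^3 \<Rightarrow> complex^3^3" where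
  "cm M = (\<chi> i j. complex_of_real (M $ i $ j))"

lemma cm_mult: "cm (M ** N) = cm M ** cm N"
  by (simp add: cm_def matrix_matrix_mult_def vec_eq_iff)

lemma cm_one: "cm (mat 1) = mat 1"
  by (simp add: cm_def mat_def vec_eq_iff)

lemma msub_l: "(A::complex^3^3) ** (B - C) = A ** B - A ** C"
  by (simp add: matrix_matrix_mult_def vec_eq_iff sum_subtractf algebra_simps)
lemma msub_r: "((A::complex^3^3) - B) ** C = A ** C - B ** C"
  by (simp add: matrix_matrix_mult_def vec_eq_iff sum_subtractf algebra_simps)

lemma conj_det:
  fixes S S' D :: "complex^3^3" and c :: complex
  assumes "S ** S' = mat 1"
  shows "det (mat c - S ** D ** S') = det (mat c - D)"
proof -
  have mc: "S ** mat c = mat c ** S"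
    by (simp add: matrix_matrix_mult_def mat_def vec_eq_iff if_distrib if_distribR mult.commute cong del: if_weak_cong)
  have "S ** mat c ** S' = mat c"
    unfolding mc by (simp add: matrix_mul_assoc[symmetric] assms)
  have e: "mat c - S ** D ** S' = S ** (mat c - D) ** S'"
    unfolding msub_l msub_r \<open>S ** mat c ** S' = mat c\<close> ..
  have "det S * det S' = 1" using assms by (metis det_I det_mul)
  then show ?thesis unfolding e det_mul by (simp add: algebra_simps)
qed

lemma lin_tendsto0:
  fixes T :: "real^3 \<Rightarrow> real^3"
  assumes "linear T" "(s \<longlongrightarrow> 0) F"
  shows "((\<lambda>m. T (s m)) \<longlongrightarrow> 0) F"
proof -
  have "bounded_linear T" using assms(1) linear_conv_bounded_linear by blast
  from bounded_linear.tendsto[OF this assms(2)] show ?thesis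
    using linear_0[OF assms(1)] by simp
qed

lemma conj_props:
  fixes T1 T2 D Di :: "real^3 \<Rightarrow> real^3"
  assumes l1: "linear T1" and l2: "linear T2" and i12: "T1 \<circ> T2 = id" and i21: "T2 \<circ> T1 = id"
    and lD: "linear D" and lDi: "linear Di" and iD: "D \<circ> Di = id" "Di \<circ> D = id"
  shows "linear (T1 \<circ> D \<circ> T2)"
    "det (matrix (T1 \<circ> D \<circ> T2)) = det (matrix D)"
    "eigenvalue (T1 \<circ> D \<circ> T2) c \<longleftrightarrow> eigenvalue D c"
    "dim (unstable_subspace (T1 \<circ> D \<circ> T2)) = dim (unstable_subspace D)"
proof -
  show lL: "linear (T1 \<circ> D \<circ> T2)" using l1 l2 lD by (intro linear_compose) auto
  have p12: "\<And>x. T1 (T2 x) = x" using i12 by (metis comp_apply id_apply)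
  have p21: "\<And>x. T2 (T1 x) = x" using i21 by (metis comp_apply id_apply)
  have pD: "\<And>x. D (Di x) = x" "\<And>x. Di (D x) = x" using iD by (metis comp_apply id_apply)+
  have mL: "matrix (T1 \<circ> D \<circ> T2) = matrix T1 ** matrix D ** matrix T2"
    using l1 l2 lD by (simp add: matrix_compose linear_compose)
  have m12: "matrix T1 ** matrix T2 = mat 1"
    using matrix_compose[OF l2 l1] i12 by (simp add: matrix_id_mat_1)
  have "det (matrix T1) * det (matrix T2) = 1" using m12 by (metis det_I det_mul)
  then show "det (matrix (T1 \<circ> D \<circ> T2)) = det (matrix D)"
    unfolding mL det_mul by (simp add: algebra_simps)
  have cm12: "cm (matrix T1) ** cm (matrix T2) = mat 1"
    using m12 by (metis cm_mult cm_one)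
  show "eigenvalue (T1 \<circ> D \<circ> T2) c \<longleftrightarrow> eigenvalue D c"
    unfolding eigenvalue_def cmatrix_def
    using conj_det[OF cm12, of c "cm (matrix D)"] mL
    by (simp add: cm_def[symmetric] cm_mult)
  have invL: "inv (T1 \<circ> D \<circ> T2) = T1 \<circ> Di \<circ> T2"
    by (rule inv_unique_comp) (auto simp: fun_eq_iff p12 p21 pD)
  have invD: "inv D = Di" using inv_unique_comp iD by blast
  have invL2: "inv (\<lambda>a. T1 (D (T2 a))) = (\<lambda>a. T1 (Di (T2 a)))"
    using invL by (simp add: comp_def)
  have pw: "\<And>m v. (inv (T1 \<circ> D \<circ> T2) ^^ m) v = T1 ((Di ^^ m) (T2 v))"
  proof -
    fix m v show "(inv (T1 \<circ> D \<circ> T2) ^^ m) v = T1 ((Di ^^ m) (T2 v))"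
      by (induction m) (simp_all add: invL2 p12 p21)
  qed
  have eq: "unstable_subspace (T1 \<circ> D \<circ> T2) = T1 ` unstable_subspace D"
  proof -
    have "v \<in> unstable_subspace (T1 \<circ> D \<circ> T2) \<longleftrightarrow> T2 v \<in> unstable_subspace D" for v
    proof
      assume "v \<in> unstable_subspace (T1 \<circ> D \<circ> T2)"
      then have "((\<lambda>m. T1 ((Di ^^ m) (T2 v))) \<longlongrightarrow> 0) sequentially"
        unfolding unstable_subspace_def pw by simp
      from lin_tendsto0[OF l2 this] show "T2 v \<in> unstable_subspace D"
        unfolding unstable_subspace_def by (simp add: p21 invD)
    next
      assume "T2 v \<in> unstable_subspace D"
      then show "v \<in> unstable_subspace (T1 \<circ> D \<circ> T2)"
        unfolding unstable_subspace_def pw invD using lin_tendsto0[OF l1] by simp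
    qed
    moreover have "v \<in> T1 ` S \<longleftrightarrow> T2 v \<in> S" for v S
      by (metis image_iff p12 p21)
    ultimately show ?thesis by blast
  qed
  have "inj_on T1 (span (unstable_subspace D))"
    by (metis inj_on_inverseI p21)
  then show "dim (unstable_subspace (T1 \<circ> D \<circ> T2)) = dim (unstable_subspace D)"
    unfolding eq using dim_image_eq[OF l1] by blast
qed

lemma diag_props:
  fixes E Bq :: real
  assumes E1: "\<bar>E\<bar> > 1" and B0: "0 < Bq" and B1: "Bq < 1"
  defines "D \<equiv> \<lambda>v::real^3. vector [E * v$1, Bq * v$2, E * v$3] :: real^3"
  shows "hyperbolic_lin D" "dim (unstable_subspace D) = 2"
    "\<exists>Di. linear Di \<and> D \<circ> Di = id \<and> Di \<circ> D = id" "linear D"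
proof -
  define Di where "Di = (\<lambda>v::real^3. vector [v$1 / E, v$2 / Bq, v$3 / E] :: real^3)"
  have E0: "E \<noteq> 0" using E1 by auto
  show lD: "linear D" unfolding D_def
    by (rule linearI) (simp_all add: vec_eq_iff forall_3 algebra_simps)
  have lDi: "linear Di" unfolding Di_def
    by (rule linearI) (simp_all add: vec_eq_iff forall_3 add_divide_distrib)
  have iD: "D \<circ> Di = id" "Di \<circ> D = id" unfolding D_def Di_def
    using E0 B0 by (auto simp: fun_eq_iff vec_eq_iff forall_3)
  show "\<exists>Di. linear Di \<and> D \<circ> Di = id \<and> Di \<circ> D = id" using lDi iD by blast
  have mD: "matrix D = (\<chi> i j. if i = j then (if i = 2 then Bq else E) else 0)"
    unfolding matrix_def D_def by (simp add: vec_eq_iff forall_3 axis_def)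
  have detD: "det (matrix D) = E * Bq * E"
    unfolding mD det_3 by simp
  have eig: "eigenvalue D c \<Longrightarrow> c = of_real E \<or> c = of_real Bq" for c
  proof -
    assume "eigenvalue D c"
    then have "(c - of_real E) * (c - of_real Bq) * (c - of_real E) = 0"
      unfolding eigenvalue_def cmatrix_def mD det_3 by (simp add: mat_def)
    then show ?thesis by auto
  qed
  show "hyperbolic_lin D" unfolding hyperbolic_lin_def
  proof (intro conjI allI impI lD)
    show "det (matrix D) \<noteq> 0" using detD E0 B0 by simp
    fix c assume "eigenvalue D c"
    then have "c = of_real E \<or> c = of_real Bq" by (rule eig)
    then show "cmod c \<noteq> 1" using E1 B0 B1 by auto
  qed
  have invD: "inv D = Di" using inv_unique_comp iD by blast
  have pw: "(Di ^^ m) v = vector [(1/E)^m * v$1, (1/Bq)^m * v$2, (1/E)^m * v$3]" for m v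
  proof (induction m)
    case 0 show ?case by (simp add: vec_eq_iff forall_3)
  next
    case (Suc m) then show ?case by (simp add: Di_def vec_eq_iff forall_3)
  qed
  have us: "unstable_subspace D = {v. v $ 2 = 0}"
  proof -
    have "((\<lambda>n. (Di ^^ n) v) \<longlonglongrightarrow> 0) \<longleftrightarrow> v $ 2 = 0" for v
    proof
      assume h: "(\<lambda>n. (Di ^^ n) v) \<longlonglongrightarrow> 0"
      have "(\<lambda>n. (1/Bq)^n * v$2) \<longlonglongrightarrow> 0"
        using tendsto_vec_nth[OF h, of 2] by (simp add: pw)
      moreover have "(\<lambda>n. Bq^n) \<longlonglongrightarrow> 0" using B0 B1 by (intro LIMSEQ_power_zero) auto
      ultimately have "(\<lambda>n. Bq^n * ((1/Bq)^n * v$2)) \<longlonglongrightarrow> 0 * 0" by (intro tendsto_mult)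
      moreover have "Bq^n * ((1/Bq)^n * v$2) = v$2" for n
        using B0 by (simp add: power_one_over)
      ultimately show "v $ 2 = 0" by (simp add: LIMSEQ_const_iff)
    next
      assume v2: "v $ 2 = 0"
      have "(Di ^^ n) v = (1/E)^n *\<^sub>R v" for n
        using v2 by (simp add: pw vec_eq_iff forall_3)
      moreover have "(\<lambda>n. (1/E)^n) \<longlonglongrightarrow> 0" using E1 by (intro LIMSEQ_power_zero) auto
      ultimately show "(\<lambda>n. (Di ^^ n) v) \<longlonglongrightarrow> 0"
        using tendsto_scaleR[of "\<lambda>n. (1/E)^n" 0 sequentially "\<lambda>n. v" v] by simp
    qed
    then show ?thesis unfolding unstable_subspace_def invD by blast
  qed
  have "{v::real^3. v $ 2 = 0} = {x. axis 2 1 \<bullet> x = 0}"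
    by (simp add: inner_axis')
  moreover have "dim {x::real^3. axis 2 1 \<bullet> x = 0} = 2"
    by (subst dim_hyperplane) (simp_all add: axis_eq_0_iff)
  ultimately show "dim (unstable_subspace D) = 2" using us by simp
qed

lemma chart_open_image:
  assumes "is_chart V \<psi>" "open S" "S \<subseteq> V"
  shows "open (\<psi> ` S)"
proof -
  have c: "continuous_on (\<psi> ` V) (inv_into V \<psi>)" "open (\<psi> ` V)" "inj_on \<psi> V"
    using assms(1) unfolding is_chart_def by auto
  have "\<psi> ` S = inv_into V \<psi> -` S \<inter> \<psi> ` V"
  proof
    show "\<psi> ` S \<subseteq> inv_into V \<psi> -` S \<inter> \<psi> ` V" using assms(3) c(3) by (auto simp: inv_into_f_f)
    show "inv_into V \<psi> -` S \<inter> \<psi> ` V \<subseteq> \<psi> ` S"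
      using c(3) by (auto simp: f_inv_into_f inv_into_f_f intro!: image_eqI)
  qed
  moreover have "open (inv_into V \<psi> -` S \<inter> \<psi> ` V)"
    using c(1,2) assms(2) continuous_on_open_vimage by blast
  ultimately show ?thesis by simp
qed

lemma C1_on_deriv:
  assumes "C1_on S g"
  obtains g' where "\<And>x. x \<in> S \<Longrightarrow> (g has_derivative blinfun_apply (g' x)) (at x)"
  using assms unfolding C1_on_def by blast

lemma chart_deriv:
  fixes A :: "('m::t2_space set \<times> ('m \<Rightarrow> real ^ 3)) set"
    and h :: "'m \<Rightarrow> 'm" and GG :: "real^3 \<Rightarrow> real^3" and D :: "real^3 \<Rightarrow> real^3"
  assumes atlas: "C1_atlas A" and cc: "compatible_chart A U \<phi>"
    and VA: "(V, \<psi>) \<in> A" and YV: "Y \<in> V"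
    and YU: "Y \<in> U"
    and oO: "open Om" and YO: "\<phi> Y \<in> Om"
    and hform: "\<And>u. u \<in> Om \<Longrightarrow> h (inv_into U \<phi> u) = inv_into U \<phi> (GG u)"
    and GGY: "GG (\<phi> Y) = \<phi> Y"
    and GGd: "(GG has_derivative D) (at (\<phi> Y))"
  obtains T1 T2 where "linear T1" "linear T2" "T1 \<circ> T2 = id" "T2 \<circ> T1 = id"
    "((\<psi> \<circ> h \<circ> inv_into V \<psi>) has_derivative T1 \<circ> D \<circ> T2) (at (\<psi> Y))"
proof -
  have chV: "is_chart V \<psi>" using atlas VA unfolding C1_atlas_def by blast
  have chU: "is_chart U \<phi>" using cc unfolding compatible_chart_def by blast
  have C1s: "C1_on (\<phi> ` (U \<inter> V)) (\<psi> \<circ> inv_into U \<phi>)" "C1_on (\<psi> ` (U \<inter> V)) (\<phi> \<circ> inv_into V \<psi>)"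
    using cc VA unfolding compatible_chart_def by auto
  define h1 where "h1 = \<psi> \<circ> inv_into U \<phi>"
  define h2 where "h2 = \<phi> \<circ> inv_into V \<psi>"
  obtain g1 where g1: "\<And>x. x \<in> \<phi> ` (U \<inter> V) \<Longrightarrow> (h1 has_derivative blinfun_apply (g1 x)) (at x)"
    using C1_on_deriv[OF C1s(1)] h1_def by metis
  obtain g2 where g2: "\<And>x. x \<in> \<psi> ` (U \<inter> V) \<Longrightarrow> (h2 has_derivative blinfun_apply (g2 x)) (at x)"
    using C1_on_deriv[OF C1s(2)] h2_def by metis
  have injU: "inj_on \<phi> U" and injV: "inj_on \<psi> V" using chU chV unfolding is_chart_def by auto
  have oU: "open U" "open V" using chU chV unfolding is_chart_def by auto
  define W where "W = \<psi> ` (U \<inter> V)"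
  define W' where "W' = \<phi> ` (U \<inter> V)"
  have oW: "open W" unfolding W_def using chart_open_image[OF chV] oU by blast
  have oW': "open W'" unfolding W'_def using chart_open_image[OF chU] oU by blast
  have pY: "\<phi> Y \<in> W'" "\<psi> Y \<in> W" using YU YV unfolding W_def W'_def by auto
  define T1 where "T1 = blinfun_apply (g1 (\<phi> Y))"
  define T2 where "T2 = blinfun_apply (g2 (\<psi> Y))"
  have d1: "(h1 has_derivative T1) (at (\<phi> Y))" using g1 pY unfolding T1_def W'_def by blast
  have d2: "(h2 has_derivative T2) (at (\<psi> Y))" using g2 pY unfolding T2_def W_def by blast
  have h2Y: "h2 (\<psi> Y) = \<phi> Y" unfolding h2_def using YV injV by (simp add: inv_into_f_f)
  have h1Y: "h1 (\<phi> Y) = \<psi> Y" unfolding h1_def using YU injU by (simp add: inv_into_f_f)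
  have l1: "linear T1" unfolding T1_def by (rule bounded_linear.linear[OF blinfun.bounded_linear_right])
  have l2: "linear T2" unfolding T2_def by (rule bounded_linear.linear[OF blinfun.bounded_linear_right])
  have inW: "inv_into V \<psi> w \<in> U \<inter> V \<and> \<psi> (inv_into V \<psi> w) = w" if "w \<in> W" for w
    using that injV unfolding W_def by (auto simp: inv_into_f_f)
  have inW': "inv_into U \<phi> w \<in> U \<inter> V \<and> \<phi> (inv_into U \<phi> w) = w" if "w \<in> W'" for w
    using that injU unfolding W'_def by (auto simp: inv_into_f_f)
  have i12: "T1 \<circ> T2 = id"
  proof -
    have "(h1 \<circ> h2 has_derivative T1 \<circ> T2) (at (\<psi> Y))"
      using diff_chain_at[OF d2] d1 h2Y by simp
    moreover have "(h1 \<circ> h2) w = id w" if "w \<in> W" for w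
      using inW[OF that] injU by (simp add: h1_def h2_def inv_into_f_f)
    ultimately have "(id has_derivative T1 \<circ> T2) (at (\<psi> Y))"
      using has_derivative_transform_within_open[OF _ oW pY(2)] by blast
    moreover have "(id has_derivative id) (at (\<psi> Y))"
      using has_derivative_ident by (simp add: id_def)
    ultimately show ?thesis using has_derivative_unique by blast
  qed
  have i21: "T2 \<circ> T1 = id"
  proof -
    have "(h2 \<circ> h1 has_derivative T2 \<circ> T1) (at (\<phi> Y))"
      using diff_chain_at[OF d1] d2 h1Y by simp
    moreover have "(h2 \<circ> h1) w = id w" if "w \<in> W'" for w
      using inW'[OF that] injV by (simp add: h1_def h2_def inv_into_f_f)
    ultimately have "(id has_derivative T2 \<circ> T1) (at (\<phi> Y))"
      using has_derivative_transform_within_open[OF _ oW' pY(1)] by blast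
    moreover have "(id has_derivative id) (at (\<phi> Y))"
      using has_derivative_ident by (simp add: id_def)
    ultimately show ?thesis using has_derivative_unique by blast
  qed
  have dL: "((\<psi> \<circ> h \<circ> inv_into V \<psi>) has_derivative T1 \<circ> D \<circ> T2) (at (\<psi> Y))"
  proof -
    have ch2: "continuous_on W h2"
      using g2 unfolding W_def
      by (meson has_derivative_continuous continuous_at_imp_continuous_on)
    define Om2 where "Om2 = h2 -` Om \<inter> W"
    have oO2: "open Om2" unfolding Om2_def using ch2 oW oO continuous_on_open_vimage by blast
    have YO2: "\<psi> Y \<in> Om2" unfolding Om2_def using pY h2Y YO by auto
    have "(h1 \<circ> (GG \<circ> h2) has_derivative T1 \<circ> (D \<circ> T2)) (at (\<psi> Y))"
    proof (rule diff_chain_at)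
      show "(GG \<circ> h2 has_derivative D \<circ> T2) (at (\<psi> Y))"
        using diff_chain_at[OF d2] GGd h2Y by simp
      show "(h1 has_derivative T1) (at ((GG \<circ> h2) (\<psi> Y)))" using d1 h2Y GGY by simp
    qed
    moreover have "(h1 \<circ> (GG \<circ> h2)) w = (\<psi> \<circ> h \<circ> inv_into V \<psi>) w" if "w \<in> Om2" for w
    proof -
      have wW: "w \<in> W" "h2 w \<in> Om" using that unfolding Om2_def by auto
      have e: "inv_into U \<phi> (h2 w) = inv_into V \<psi> w"
        using inW[OF wW(1)] injU by (simp add: h2_def inv_into_f_f)
      show ?thesis using hform[OF wW(2)] e by (simp add: h1_def)
    qed
    ultimately show ?thesis
      using has_derivative_transform_within_open[OF _ oO2 YO2,
          of "h1 \<circ> GG \<circ> h2" "T1 \<circ> D \<circ> T2" UNIV "\<psi> \<circ> h \<circ> inv_into V \<psi>"]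
      by (simp add: o_assoc)
  qed
  show ?thesis using that l1 l2 i12 i21 dL by blast
qed

lemma index2_from_chart:
  fixes A :: "('m::t2_space set \<times> ('m \<Rightarrow> real ^ 3)) set"
    and h :: "'m \<Rightarrow> 'm" and GG :: "real^3 \<Rightarrow> real^3" and E Bq :: real
  assumes atlas: "C1_atlas A" and cc: "compatible_chart A U \<phi>"
    and YU: "Y \<in> U" and hY: "h Y = Y"
    and oO: "open Om" and YO: "\<phi> Y \<in> Om"
    and hform: "\<And>u. u \<in> Om \<Longrightarrow> h (inv_into U \<phi> u) = inv_into U \<phi> (GG u)"
    and GGY: "GG (\<phi> Y) = \<phi> Y"
    and GGd: "(GG has_derivative (\<lambda>v. vector [E * v$1, Bq * v$2, E * v$3])) (at (\<phi> Y))"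
    and E1: "\<bar>E\<bar> > 1" and B0: "0 < Bq" and B1: "Bq < 1"
  shows "hyperbolic_fixed_index A h Y 2"
proof -
  define D where "D = (\<lambda>v::real^3. vector [E * v$1, Bq * v$2, E * v$3] :: real^3)"
  note dp = diag_props[OF E1 B0 B1, folded D_def]
  obtain Di where Di: "linear Di" "D \<circ> Di = id" "Di \<circ> D = id" using dp(3) by blast
  have "Y \<in> \<Union>(fst ` A)" using atlas unfolding C1_atlas_def by simp
  then obtain pr where pr: "pr \<in> A" "Y \<in> fst pr" by blast
  obtain V \<psi> where "pr = (V, \<psi>)" by (cases pr)
  with pr have VA: "(V, \<psi>) \<in> A" and YV: "Y \<in> V" by auto
  obtain T1 T2 where l1: "linear T1" and l2: "linear T2" and i12: "T1 \<circ> T2 = id" and i21: "T2 \<circ> T1 = id"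
    and dL: "((\<psi> \<circ> h \<circ> inv_into V \<psi>) has_derivative T1 \<circ> D \<circ> T2) (at (\<psi> Y))"
    using chart_deriv[OF atlas cc VA YV YU oO YO hform GGY GGd[folded D_def]] by blast
  note cp = conj_props[OF l1 l2 i12 i21 dp(4) Di]
  show ?thesis unfolding hyperbolic_fixed_index_def
  proof (intro exI conjI)
    show "deriv_at_fixed A h Y (T1 \<circ> D \<circ> T2)"
      unfolding deriv_at_fixed_def using hY VA YV dL by blast
    show "hyperbolic_lin (T1 \<circ> D \<circ> T2)"
      using dp(1) cp unfolding hyperbolic_lin_def by simp
    show "dim (unstable_subspace (T1 \<circ> D \<circ> T2)) = 2" using cp(4) dp(2) by simp
  qed
qed

lemma diag3:
  fixes \<alpha> \<beta> \<gamma> :: real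
  assumes "\<alpha> \<noteq> 0" "\<beta> \<noteq> 0" "\<gamma> \<noteq> 0"
  defines "D \<equiv> \<lambda>v::real^3. vector [\<alpha> * v$1, \<beta> * v$2, \<gamma> * v$3] :: real^3"
  shows "linear D" "det (matrix D) = \<alpha> * \<beta> * \<gamma>"
    "\<exists>Di. linear Di \<and> D \<circ> Di = id \<and> Di \<circ> D = id"
proof -
  define Di where "Di = (\<lambda>v::real^3. vector [v$1 / \<alpha>, v$2 / \<beta>, v$3 / \<gamma>] :: real^3)"
  show lD: "linear D" unfolding D_def
    by (rule linearI) (simp_all add: vec_eq_iff forall_3 algebra_simps)
  have lDi: "linear Di" unfolding Di_def
    by (rule linearI) (simp_all add: vec_eq_iff forall_3 add_divide_distrib)
  have iD: "D \<circ> Di = id" "Di \<circ> D = id" unfolding D_def Di_def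
    using assms by (auto simp: fun_eq_iff vec_eq_iff forall_3)
  show "\<exists>Di. linear Di \<and> D \<circ> Di = id \<and> Di \<circ> D = id" using lDi iD by blast
  have mD: "matrix D = (\<chi> i j. if i = j then (if i = 1 then \<alpha> else if i = 2 then \<beta> else \<gamma>) else 0)"
    unfolding matrix_def D_def by (simp add: vec_eq_iff forall_3 axis_def)
  show "det (matrix D) = \<alpha> * \<beta> * \<gamma>"
    unfolding mD det_3 by simp
qed

lemma ev_pow_lt:
  fixes x r :: real
  assumes "0 \<le> x" "x < 1" "0 < r"
  shows "eventually (\<lambda>n. x ^ n < r) sequentially"
proof -
  have "(\<lambda>n. x ^ n) \<longlonglongrightarrow> 0" using assms by (intro LIMSEQ_power_zero) auto
  from order_tendstoD(2)[OF this assms(3)] show ?thesis .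
qed

lemma small_mult: "0 \<le> (x::real) \<Longrightarrow> x \<le> 1 \<Longrightarrow> \<bar>y\<bar> < 1 \<Longrightarrow> \<bar>x * y\<bar> < 1"
  using mult_right_mono[of x 1 "\<bar>y\<bar>"] by (simp add: abs_mult)

lemma vec_lim_axis:
  fixes s :: "nat \<Rightarrow> real"
  assumes "s \<longlonglongrightarrow> 0"
  shows "(\<lambda>m. v + s m *\<^sub>R axis i 1) \<longlonglongrightarrow> (v :: real^3)"
proof -
  have "(\<lambda>m. s m *\<^sub>R axis i (1::real)) \<longlonglongrightarrow> 0 *\<^sub>R axis i 1"
    by (intro tendsto_scaleR assms tendsto_const)
  from tendsto_add[OF tendsto_const this, of v] show ?thesis by simp
qed

lemma vec3_collapse: "vector [v$1, v$2, v$3] = (v::real^3)"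
  by (simp add: vec_eq_iff forall_3)

lemma vec3_eq: "(v::real^3) = vector [v$1, v$2, v$3]"
  by (simp add: vec_eq_iff forall_3)

theorem proposition4p3:
  fixes A :: "('m::t2_space set \<times> ('m \<Rightarrow> real ^ 3)) set"
    and f0 :: "'m \<Rightarrow> 'm" and X :: 'm
    and fam :: "real \<Rightarrow> 'm \<Rightarrow> 'm" and \<delta> :: real
    and U :: "'m set" and \<phi> :: "'m \<Rightarrow> real ^ 3"
    and lam lamt \<mu> :: real and P Q :: 'm and p q :: real and N :: nat
    and a b c :: real
  assumes M: "closed_3_manifold A"
    and f0_diff: "Diff1 A f0"
    \<comment> \<open>X hyperbolic fixed point of index 1, volume-expanding, eigenvalues positive and distinct\<close>
    and X_hyp: "\<exists>L. deriv_at_fixed A f0 X L \<and> hyperbolic_lin L \<and> dim (unstable_subspace L) = 1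
                   \<and> \<bar>det (matrix L)\<bar> > 1
                   \<and> (\<forall>z. eigenvalue L z \<longrightarrow> z \<in> \<real> \<and> Re z > 0)
                   \<and> card {z. eigenvalue L z} = 3"
    \<comment> \<open>the family\<close>
    and \<delta>_pos: "\<delta> > 0"
    and fam_diff: "\<And>t. \<bar>t\<bar> < \<delta> \<Longrightarrow> Diff1 A (fam t)"
    \<comment> \<open>(DT1)\<close>
    and DT1: "fam 0 = f0"
    \<comment> \<open>(DT2)\<close>
    and DT2: "compatible_chart A U \<phi>"
      "\<phi> ` U = {v. \<forall>i. -1 < v $ i \<and> v $ i < 1}"
      "X \<in> U" "\<phi> X = 0"
    \<comment> \<open>(DT3)\<close>
    and DT3_const: "0 < lamt" "lamt < lam" "lam < 1" "1 < \<mu>"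
    and DT3: "\<And>t v. \<bar>t\<bar> < \<delta> \<Longrightarrow> \<bar>v $ 1\<bar> < 1 \<Longrightarrow> \<bar>v $ 2\<bar> < 1 \<Longrightarrow> \<bar>v $ 3\<bar> < 1 / \<mu> \<Longrightarrow>
        fam t (inv_into U \<phi> v) \<in> U \<and>
        \<phi> (fam t (inv_into U \<phi> v)) = vector [lam * v $ 1, lamt * v $ 2, \<mu> * v $ 3]"
    \<comment> \<open>(DT4)\<close>
    and DT4: "P \<in> U" "Q \<in> U" "\<phi> P = vector [0, 0, p]" "\<phi> Q = vector [0, q, 0]"
      "0 < p" "p < 1" "0 < q" "q < 1" "N \<ge> 2" "(f0 ^^ N) P = Q"
      "\<And>t i. \<bar>t\<bar> < \<delta> \<Longrightarrow> 0 < i \<Longrightarrow> i < N \<Longrightarrow> (fam t ^^ i) P \<notin> U"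
    \<comment> \<open>(DT5)\<close>
    and DT5: "\<exists>\<epsilon>0>0. {v. \<bar>v $ 1\<bar> \<le> \<epsilon>0 \<and> \<bar>v $ 2\<bar> \<le> \<epsilon>0 \<and> \<bar>v $ 3 - p\<bar> \<le> \<epsilon>0} \<subseteq> \<phi> ` U \<and>
        (\<forall>t x y z. \<bar>t\<bar> < \<delta> \<longrightarrow> \<bar>x\<bar> \<le> \<epsilon>0 \<longrightarrow> \<bar>y\<bar> \<le> \<epsilon>0 \<longrightarrow> \<bar>z\<bar> \<le> \<epsilon>0 \<longrightarrow>
           (fam t ^^ N) (inv_into U \<phi> (vector [x, y, z + p])) \<in> U \<and>
           \<phi> ((fam t ^^ N) (inv_into U \<phi> (vector [x, y, z + p]))) = vector [a * z, b * y + q, c * x + t])"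
      "a \<noteq> 0" "b \<noteq> 0" "c \<noteq> 0"
  shows "\<exists>\<epsilon>1>0. \<forall>\<epsilon>. 0 < \<epsilon> \<and> \<epsilon> < \<epsilon>1 \<longrightarrow>
           (\<exists>\<tau>. 0 < \<tau> \<and> \<tau> \<le> \<epsilon> \<and> \<tau> < \<delta> \<and>
              (\<exists>Y k. k \<ge> 1 \<and> (fam \<tau> ^^ k) Y = Y \<and> hyperbolic_fixed_index A (fam \<tau> ^^ k) Y 2 \<and>
                 Wu_point (fam \<tau>) X \<inter> Ws_orbit (fam \<tau>) k Y \<noteq> {} \<and>
                 Ws_point (fam \<tau>) X \<inter> Wu_orbit (fam \<tau>) k Y \<noteq> {}))"
proof (rule exI[of _ 1], intro conjI allI impI)
  fix \<epsilon> :: real assume "0 < \<epsilon> \<and> \<epsilon> < 1"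
  then have \<epsilon>0: "0 < \<epsilon>" by simp
  obtain e0 where e0: "e0 > 0"
    "{v. \<bar>v $ 1\<bar> \<le> e0 \<and> \<bar>v $ 2\<bar> \<le> e0 \<and> \<bar>v $ 3 - p\<bar> \<le> e0} \<subseteq> \<phi> ` U"
    "\<And>t x y z. \<bar>t\<bar> < \<delta> \<Longrightarrow> \<bar>x\<bar> \<le> e0 \<Longrightarrow> \<bar>y\<bar> \<le> e0 \<Longrightarrow> \<bar>z\<bar> \<le> e0 \<Longrightarrow>
           (fam t ^^ N) (inv_into U \<phi> (vector [x, y, z + p])) \<in> U \<and>
           \<phi> ((fam t ^^ N) (inv_into U \<phi> (vector [x, y, z + p]))) = vector [a * z, b * y + q, c * x + t]"
    using DT5(1) by blast
  note abc = DT5(2,3,4)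
  have pq: "0 < p" "p < 1" "0 < q" "q < 1" using DT4 by auto
  have lm: "0 < lamt" "lamt < lam" "lam < 1" "1 < \<mu>" using DT3_const by auto
  have atlas: "C1_atlas A" using M unfolding closed_3_manifold_def by blast
  have chU: "is_chart U \<phi>" using DT2(1) unfolding compatible_chart_def by blast
  have injU: "inj_on \<phi> U" using chU unfolding is_chart_def by blast
  have cinv: "continuous_on (\<phi> ` U) (inv_into U \<phi>)" using chU unfolding is_chart_def by blast
  have cube: "u \<in> \<phi> ` U" if "\<bar>u$1\<bar> < 1" "\<bar>u$2\<bar> < 1" "\<bar>u$3\<bar> < 1" for u
    using that unfolding DT2(2) by (auto simp: forall_3 abs_less_iff)
  have fi: "\<phi> (inv_into U \<phi> u) = u" if "u \<in> \<phi> ` U" for u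
    using that by (simp add: f_inv_into_f)
  have ii: "inv_into U \<phi> (\<phi> x) = x" if "x \<in> U" for x
    using that injU by (simp add: inv_into_f_f)
  have vol: "lam * \<mu> > 1"
  proof -
    obtain L where L: "deriv_at_fixed A f0 X L" "\<bar>det (matrix L)\<bar> > 1" using X_hyp by blast
    then obtain V \<psi> where VA: "(V, \<psi>) \<in> A" and XV: "X \<in> V"
      and dL: "((\<psi> \<circ> f0 \<circ> inv_into V \<psi>) has_derivative L) (at (\<psi> X))"
      unfolding deriv_at_fixed_def by blast
    define Dp where "Dp = (\<lambda>v::real^3. vector [lam * v$1, lamt * v$2, \<mu> * v$3] :: real^3)"
    have nz: "lam \<noteq> 0" "lamt \<noteq> 0" "\<mu> \<noteq> 0" using lm by auto
    note d3 = diag3[OF nz, folded Dp_def]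
    obtain Di where Di: "linear Di" "Dp \<circ> Di = id" "Di \<circ> Dp = id" using d3(3) by blast
    define Om where "Om = {v::real^3. \<bar>v$1\<bar> < 1 \<and> \<bar>v$2\<bar> < 1 \<and> \<bar>v$3\<bar> < 1 / \<mu>}"
    have oOm: "open Om" unfolding Om_def
      by (intro open_Collect_conj open_Collect_less continuous_intros)
    have XO: "\<phi> X \<in> Om" using DT2(4) lm unfolding Om_def by simp
    have hf: "f0 (inv_into U \<phi> u) = inv_into U \<phi> (Dp u)" if "u \<in> Om" for u
    proof -
      have "f0 (inv_into U \<phi> u) \<in> U \<and> \<phi> (f0 (inv_into U \<phi> u)) = Dp u"
        using DT3[of 0 u] that \<delta>_pos DT1 unfolding Om_def Dp_def by auto
      then show ?thesis using ii by metis
    qed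
    have GY: "Dp (\<phi> X) = \<phi> X" using DT2(4) unfolding Dp_def by (simp add: vec_eq_iff forall_3)
    have Gd: "(Dp has_derivative Dp) (at (\<phi> X))"
      using d3(1) by (simp add: bounded_linear_imp_has_derivative linear_conv_bounded_linear)
    obtain T1 T2 where l1: "linear T1" and l2: "linear T2" and i12: "T1 \<circ> T2 = id" and i21: "T2 \<circ> T1 = id"
      and dL2: "((\<psi> \<circ> f0 \<circ> inv_into V \<psi>) has_derivative T1 \<circ> Dp \<circ> T2) (at (\<psi> X))"
      using chart_deriv[OF atlas DT2(1) VA XV DT2(3) oOm XO hf GY Gd] by blast
    have "L = T1 \<circ> Dp \<circ> T2" using has_derivative_unique[OF dL dL2] .
    then have "det (matrix L) = lam * lamt * \<mu>"
      using conj_props(2)[OF l1 l2 i12 i21 d3(1) Di] d3(2) by simp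
    then have "lam * lamt * \<mu> > 1" using L(2) lm by simp
    moreover have "lam * lamt * \<mu> < lam * \<mu>" using lm by simp
    ultimately show ?thesis by linarith
  qed
  define Emin where "Emin = 1 + p / (1 - p) + p / e0 + \<bar>a\<bar> * p + p / (\<bar>c\<bar> * e0)"
  have Emin0: "Emin > 0" unfolding Emin_def using pq e0(1) by (simp add: add_pos_nonneg)
  have ev: "eventually (\<lambda>n. lamt ^ n < (1 - q) / (4 * \<bar>b\<bar>) \<and> lamt ^ n < e0 / (4 * q)
      \<and> (1 / (lam * \<mu>)) ^ n < \<bar>a * c\<bar> / Emin
      \<and> (1 / \<mu>) ^ n < min (min \<epsilon> \<delta>) (\<bar>c\<bar> * e0) / p) sequentially"
  proof (intro eventually_conj ev_pow_lt)
    show "1 / (lam * \<mu>) < 1"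
      using vol by simp
  qed (use lm pq abc e0(1) Emin0 \<epsilon>0 \<delta>_pos in \<open>auto simp: divide_pos_pos\<close>)
  then obtain n where n: "lamt ^ n < (1 - q) / (4 * \<bar>b\<bar>)" "lamt ^ n < e0 / (4 * q)"
      "(1 / (lam * \<mu>)) ^ n < \<bar>a * c\<bar> / Emin"
      "(1 / \<mu>) ^ n < min (min \<epsilon> \<delta>) (\<bar>c\<bar> * e0) / p"
    unfolding eventually_sequentially by blast
  show "\<exists>\<tau>. 0 < \<tau> \<and> \<tau> \<le> \<epsilon> \<and> \<tau> < \<delta> \<and>
              (\<exists>Y k. k \<ge> 1 \<and> (fam \<tau> ^^ k) Y = Y \<and> hyperbolic_fixed_index A (fam \<tau> ^^ k) Y 2 \<and>
                 Wu_point (fam \<tau>) X \<inter> Ws_orbit (fam \<tau>) k Y \<noteq> {} \<and>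
                 Ws_point (fam \<tau>) X \<inter> Wu_orbit (fam \<tau>) k Y \<noteq> {})"
  proof -
  define \<tau> where "\<tau> = p / \<mu> ^ n"
  have mun: "\<mu> ^ n > 0" "\<mu> ^ n \<ge> 1" using lm by auto
  have mtau: "\<mu> ^ n * \<tau> = p" unfolding \<tau>_def using mun(1) by (metis less_irrefl nonzero_mult_div_cancel_left times_divide_eq_right)
  have tpos: "\<tau> > 0" unfolding \<tau>_def using pq mun by simp
  have tmin: "\<tau> < min (min \<epsilon> \<delta>) (\<bar>c\<bar> * e0)"
  proof -
    have "p * (1 / \<mu>) ^ n < min (min \<epsilon> \<delta>) (\<bar>c\<bar> * e0)"
      using n(4) pq by (simp add: field_simps)
    then show ?thesis unfolding \<tau>_def by (simp add: power_one_over)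
  qed
  have tle: "\<tau> \<le> \<epsilon>" "\<tau> < \<delta>" "\<tau> < \<bar>c\<bar> * e0" using tmin by auto
  have tabs: "\<bar>\<tau>\<bar> < \<delta>" using tle tpos by simp
  define g where "g = fam \<tau>"
  have dg: "Diff1 A g" unfolding g_def using fam_diff[OF tabs] .
  have injg: "inj g" using dg unfolding Diff1_def by (simp add: bij_is_inj)
  define iv where "iv = inv_into U \<phi>"
  have fi': "\<phi> (iv u) = u" if "u \<in> \<phi> ` U" for u using fi[OF that] iv_def by simp
  have ii': "iv (\<phi> x) = x" if "x \<in> U" for x using ii[OF that] iv_def by simp
  have ivU: "iv u \<in> U" if "u \<in> \<phi> ` U" for u using that iv_def by (simp add: inv_into_into)
  have civ: "continuous_on (\<phi> ` U) iv" using cinv iv_def by simp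
  define e where "e = lamt ^ n * q"
  define B where "B = lamt ^ n * b"
  define Aa where "Aa = lam ^ n * a"
  define C where "C = \<mu> ^ n * c"
  define E where "E = Aa * C"
  have ltn: "lamt ^ n > 0" "lamt ^ n \<le> 1" using lm by (auto intro: power_le_one)
  have lan: "lam ^ n > 0" "lam ^ n \<le> 1" using lm by (auto intro: power_le_one)
  have epos: "e > 0" unfolding e_def using ltn pq by simp
  have e4: "4 * e < e0"
    using n(2) pq unfolding e_def by (simp add: field_simps)
  have B4: "4 * \<bar>B\<bar> < 1 - q"
  proof -
    have "\<bar>b\<bar> > 0" using abc by simp
    then have "lamt ^ n * (4 * \<bar>b\<bar>) < 1 - q" using n(1) by (simp add: field_simps)
    then show ?thesis unfolding B_def using ltn by (simp add: abs_mult)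
  qed
  have Bq: "\<bar>b\<bar> * e = \<bar>B\<bar> * q" unfolding B_def e_def using ltn by (simp add: abs_mult)
  have B0: "B \<noteq> 0" unfolding B_def using lm abc by simp
  have Bs: "\<bar>B\<bar> < 1/4" using B4 pq by simp
  have E_eq: "E = (lam * \<mu>) ^ n * (a * c)" unfolding E_def Aa_def C_def by (simp add: power_mult_distrib)
  have Ebig: "\<bar>E\<bar> > Emin"
  proof -
    define t where "t = (1 / (lam * \<mu>)) ^ n"
    have tp: "t > 0" unfolding t_def using lm by simp
    have t1: "t * (lam * \<mu>) ^ n = 1" unfolding t_def using lm by (simp add: power_one_over)
    have "Emin * t < \<bar>a * c\<bar>" using n(3) Emin0 tp unfolding t_def[symmetric] by (simp add: field_simps)
    then have "Emin * t * (lam * \<mu>) ^ n < \<bar>a * c\<bar> * (lam * \<mu>) ^ n"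
      using lm by (intro mult_strict_right_mono) auto
    then have "Emin < \<bar>a * c\<bar> * (lam * \<mu>) ^ n" using t1 by (simp add: mult.assoc)
    then show ?thesis unfolding E_eq using lm by (simp add: abs_mult mult.commute)
  qed
  have Emin_ge: "Emin \<ge> 1 + p / (1 - p)" "Emin \<ge> 1 + p / e0" "Emin \<ge> 1 + \<bar>a\<bar> * p"
    unfolding Emin_def using pq e0(1) abc by (auto intro!: add_nonneg_nonneg simp: divide_nonneg_pos)
  have "p / (1 - p) \<ge> 0" using pq by simp
  then have E1: "\<bar>E\<bar> > 1" using Ebig Emin_ge(1) by linarith
  define ys where "ys = e / (1 - B)"
  have B1p: "1 - B > 3/4" using Bs by linarith
  have ysB: "e = ys - B * ys"
  proof -
    have "ys * (1 - B) = e" unfolding ys_def using B1p by simp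
    then show ?thesis by (simp add: algebra_simps)
  qed
  have ys0: "ys > 0" unfolding ys_def using epos B1p by simp
  have ys2: "ys \<le> 2 * e"
  proof -
    have "e * 1 \<le> e * (2 * (1 - B))" using B1p epos by (intro mult_left_mono) auto
    then have "e \<le> 2 * e * (1 - B)" by (simp add: algebra_simps)
    then show ?thesis unfolding ys_def using B1p by (simp add: divide_le_eq)
  qed
  define G where "G = (\<lambda>u::real^3. vector [Aa * (u$3 - p), B * u$2 + e, p + C * u$1] :: real^3)"
  define Om where "Om = {u::real^3. \<bar>u$1\<bar> < e0 \<and> \<bar>u$2\<bar> < e0 \<and> \<bar>u$3 - p\<bar> < e0 \<and>
      \<bar>a * (u$3 - p)\<bar> < 1 \<and> \<bar>b * u$2 + q\<bar> < 1 \<and> \<mu> ^ n * \<bar>c * u$1 + \<tau>\<bar> < 1}"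
  have OmU: "u \<in> \<phi> ` U" if "u \<in> Om" for u
    using that e0(2) unfolding Om_def by force
  have S1: "(g ^^ m) (iv v) = iv (vector [lam ^ m * v$1, lamt ^ m * v$2, \<mu> ^ m * v$3])"
    if v1: "\<bar>v$1\<bar> < 1" and v2: "\<bar>v$2\<bar> < 1" and v3: "\<mu> ^ m * \<bar>v$3\<bar> < 1" for m v
    using v3
  proof (induction m)
    case 0
    have "vector [lam ^ 0 * v$1, lamt ^ 0 * v$2, \<mu> ^ 0 * v$3] = v" by (simp add: vec_eq_iff forall_3)
    then show ?case by simp
  next
    case (Suc m)
    have mle: "\<mu> ^ m \<le> \<mu> ^ Suc m" using lm by simp
    have mm: "\<mu> ^ m * \<bar>v$3\<bar> < 1" using mult_right_mono[OF mle abs_ge_zero, of "v$3"] Suc.prems by linarith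
    define w where "w = (vector [lam ^ m * v$1, lamt ^ m * v$2, \<mu> ^ m * v$3] :: real^3)"
    have IH: "(g ^^ m) (iv v) = iv w" using Suc.IH mm w_def by simp
    have w1: "\<bar>w$1\<bar> < 1" unfolding w_def using small_mult[of "lam ^ m" "v$1"] lm v1 by (simp add: power_le_one)
    have w2: "\<bar>w$2\<bar> < 1" unfolding w_def using small_mult[of "lamt ^ m" "v$2"] lm v2 by (simp add: power_le_one)
    have w3: "\<bar>w$3\<bar> < 1 / \<mu>"
    proof -
      have "\<mu> * (\<mu> ^ m * \<bar>v$3\<bar>) < 1" using Suc.prems by (simp add: mult.assoc)
      then have "\<mu> ^ m * \<bar>v$3\<bar> < 1 / \<mu>" using lm by (simp add: field_simps)
      then show ?thesis unfolding w_def using lm by (simp add: abs_mult)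
    qed
    have "g (iv w) \<in> U \<and> \<phi> (g (iv w)) = vector [lam * w$1, lamt * w$2, \<mu> * w$3]"
      using DT3[OF tabs w1 w2 w3] unfolding g_def iv_def by simp
    then have "g (iv w) = iv (vector [lam * w$1, lamt * w$2, \<mu> * w$3])" using ii' by metis
    then show ?case using IH by (simp add: w_def mult.assoc)
  qed
  have KL: "(g ^^ (n + N)) (iv u) = iv (G u) \<and> G u \<in> \<phi> ` U" if uO: "u \<in> Om" for u
  proof -
    have u: "\<bar>u$1\<bar> < e0" "\<bar>u$2\<bar> < e0" "\<bar>u$3 - p\<bar> < e0" "\<bar>a * (u$3 - p)\<bar> < 1"
      "\<bar>b * u$2 + q\<bar> < 1" "\<mu> ^ n * \<bar>c * u$1 + \<tau>\<bar> < 1" using uO unfolding Om_def by auto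
    define z where "z = u$3 - p"
    have ueq: "vector [u$1, u$2, z + p] = u" by (simp add: vec_eq_iff forall_3 z_def)
    have h5: "(g ^^ N) (iv u) \<in> U \<and> \<phi> ((g ^^ N) (iv u)) = vector [a * z, b * u$2 + q, c * u$1 + \<tau>]"
      using e0(3)[OF tabs, of "u$1" "u$2" z] u unfolding ueq g_def iv_def z_def by (simp add: vec3_collapse)
    define w where "w = (vector [a * z, b * u$2 + q, c * u$1 + \<tau>] :: real^3)"
    have gN: "(g ^^ N) (iv u) = iv w" using h5 ii' unfolding w_def by metis
    have gn: "(g ^^ n) (iv w) = iv (vector [lam ^ n * w$1, lamt ^ n * w$2, \<mu> ^ n * w$3])"
      by (rule S1) (use u in \<open>simp_all add: w_def z_def\<close>)
    have Gu: "vector [lam ^ n * w$1, lamt ^ n * w$2, \<mu> ^ n * w$3] = G u"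
      unfolding w_def G_def z_def Aa_def B_def e_def C_def using mtau
      by (simp add: vec_eq_iff forall_3 algebra_simps)
    have "(g ^^ (n + N)) (iv u) = iv (G u)" using gN gn Gu by (simp add: funpow_add)
    moreover have "G u \<in> \<phi> ` U"
    proof (rule cube)
      show "\<bar>G u $ 1\<bar> < 1" unfolding G_def Aa_def using small_mult[of "lam ^ n" "a * (u$3 - p)"] lan u
        by (simp add: mult.assoc)
      show "\<bar>G u $ 2\<bar> < 1" unfolding G_def B_def e_def
        using small_mult[of "lamt ^ n" "b * u$2 + q"] ltn u by (simp add: algebra_simps)
      have "\<bar>\<mu> ^ n * (c * u $ 1 + \<tau>)\<bar> < 1" using u mun by (simp add: abs_mult)
      then show "\<bar>G u $ 3\<bar> < 1" unfolding G_def C_def using mtau by (simp add: algebra_simps)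
    qed
    ultimately show ?thesis by simp
  qed
  define K where "K = 2 * (n + N)"
  have KK: "(g ^^ K) (iv u) = iv (G (G u))" if "u \<in> Om" "G u \<in> Om" for u
  proof -
    have "g ^^ K = g ^^ (n + N) \<circ> g ^^ (n + N)" unfolding K_def by (metis funpow_add mult_2)
    then show ?thesis using KL[OF that(1)] KL[OF that(2)] by simp
  qed
  have GGf: "G (G u) = vector [E * u$1, ys + B^2 * (u$2 - ys), p + E * (u$3 - p)]" for u
    unfolding G_def E_def ysB by (simp add: vec_eq_iff forall_3 algebra_simps power2_eq_square)
  have G0: "G (vector [0, y, p]) = vector [0, B * y + e, p]" for y
    unfolding G_def by simp
  have bnd: "vector [0, y, p] \<in> Om" if "\<bar>y\<bar> \<le> 4 * e" for y
  proof -
    have "\<bar>b * y\<bar> \<le> \<bar>b\<bar> * (4 * e)" using that by (simp add: abs_mult mult_left_mono)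
    also have "\<dots> = 4 * \<bar>B\<bar> * q" using Bq by simp
    finally have by1: "\<bar>b * y\<bar> \<le> 4 * \<bar>B\<bar> * q" .
    have h1: "4 * \<bar>B\<bar> * q < (1 - q) * q" using B4 pq by simp
    have h2: "(1 - q) * q + q \<le> 1"
    proof -
      have "(1 - q) * q + q = 1 - (1 - q)^2" by (simp add: power2_eq_square algebra_simps)
      moreover have "(1 - q)^2 \<ge> 0" by (rule zero_le_power2)
      ultimately show ?thesis by linarith
    qed
    have h3: "\<bar>b * y + q\<bar> \<le> \<bar>b * y\<bar> + \<bar>q\<bar>" by (rule abs_triangle_ineq)
    have h3': "\<bar>b * y + q\<bar> \<le> \<bar>b * y\<bar> + q" using h3 pq by simp
    have "\<bar>b * y + q\<bar> < 1" using by1 h1 h2 h3' by linarith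
    then show ?thesis unfolding Om_def using that e4 mtau pq e0(1) tpos by (simp add: abs_mult)
  qed
  have bndG: "\<bar>B * y + e\<bar> \<le> 4 * e" if "\<bar>y\<bar> \<le> 4 * e" for y
  proof -
    have "\<bar>B * y\<bar> \<le> 1/4 * (4 * e)" unfolding abs_mult
      using Bs that by (intro mult_mono) auto
    then show ?thesis using epos by linarith
  qed
  define Y0 where "Y0 = (vector [0, ys, p] :: real^3)"
  have ys4: "\<bar>ys\<bar> \<le> 4 * e" using ys0 ys2 epos by simp
  have Y0O: "Y0 \<in> Om" unfolding Y0_def using bnd[OF ys4] .
  have GY0: "G Y0 = Y0" unfolding Y0_def G0 using ysB by simp
  have Y0U: "Y0 \<in> \<phi> ` U" using OmU[OF Y0O] .
  define Y where "Y = iv Y0"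
  have YU: "Y \<in> U" unfolding Y_def using ivU[OF Y0U] .
  have phY: "\<phi> Y = Y0" unfolding Y_def using fi'[OF Y0U] .
  have fixY: "(g ^^ K) Y = Y" unfolding Y_def using KK[OF Y0O] GY0 Y0O by simp
  define Om2 where "Om2 = {u. u \<in> Om \<and> G u \<in> Om}"
  have Om2e: "Om2 = {u::real^3. \<bar>u$1\<bar> < e0 \<and> \<bar>u$2\<bar> < e0 \<and> \<bar>u$3 - p\<bar> < e0 \<and>
      \<bar>a * (u$3 - p)\<bar> < 1 \<and> \<bar>b * u$2 + q\<bar> < 1 \<and> \<mu> ^ n * \<bar>c * u$1 + \<tau>\<bar> < 1 \<and>
      \<bar>Aa * (u$3 - p)\<bar> < e0 \<and> \<bar>B * u$2 + e\<bar> < e0 \<and> \<bar>p + C * u$1 - p\<bar> < e0 \<and>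
      \<bar>a * (p + C * u$1 - p)\<bar> < 1 \<and> \<bar>b * (B * u$2 + e) + q\<bar> < 1 \<and> \<mu> ^ n * \<bar>c * (Aa * (u$3 - p)) + \<tau>\<bar> < 1}"
    unfolding Om2_def Om_def G_def by auto
  have oOm2: "open Om2" unfolding Om2e
    by (intro open_Collect_conj open_Collect_less continuous_intros)
  have hyp: "hyperbolic_fixed_index A (g ^^ K) Y 2"
  proof (rule index2_from_chart[where h="g ^^ K" and Om=Om2 and GG="\<lambda>u. G (G u)" and E=E and Bq="B^2",
        OF atlas DT2(1) YU fixY oOm2])
    show "\<phi> Y \<in> Om2" unfolding phY Om2_def using Y0O GY0 by simp
    show "(g ^^ K) (inv_into U \<phi> u) = inv_into U \<phi> (G (G u))" if "u \<in> Om2" for u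
      using KK that unfolding Om2_def iv_def by simp
    show "G (G (\<phi> Y)) = \<phi> Y" unfolding phY GY0 GY0 ..
    define Dg where "Dg = (\<lambda>v::real^3. vector [E * v$1, B^2 * v$2, E * v$3] :: real^3)"
    have lDg: "linear Dg" unfolding Dg_def
      by (rule linearI) (simp_all add: vec_eq_iff forall_3 algebra_simps)
    have eqf: "(\<lambda>u. G (G u)) = (\<lambda>u. Dg u + vector [0, ys - B^2 * ys, p - E * p])"
      unfolding Dg_def GGf by (simp add: fun_eq_iff vec_eq_iff forall_3 algebra_simps)
    have "(Dg has_derivative Dg) (at (\<phi> Y))"
      using lDg by (simp add: bounded_linear_imp_has_derivative linear_conv_bounded_linear)
    then show "((\<lambda>u. G (G u)) has_derivative (\<lambda>v. vector [E * v$1, B^2 * v$2, E * v$3])) (at (\<phi> Y))"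
      unfolding eqf Dg_def[symmetric] by (rule has_derivative_add_const)
    show "\<bar>E\<bar> > 1" by (rule E1)
    show "0 < B^2" using B0 by simp
    show "B^2 < 1" using Bs by (simp add: abs_square_less_1)
  qed
  have Yorb: "Y \<in> orbit g Y" unfolding orbit_def by (auto intro: exI[of _ 0])
  have P_eq: "P = iv (vector [0, 0, p])" using ii'[OF DT4(1)] DT4(3) by simp
  have PWs: "P \<in> Ws_orbit g K Y"
  proof -
    define Ym where "Ym m = ys - (B^2)^m * ys" for m
    have Ym4: "\<bar>Ym m\<bar> \<le> 4 * e" for m
    proof -
      have B2: "B^2 < 1" using Bs by (simp add: abs_square_less_1)
      have "(B^2)^m \<le> 1" by (rule power_le_one[of "B^2" m]) (use B2 in auto)
      moreover have "(B^2)^m \<ge> 0" by simp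
      ultimately have h: "0 \<le> (B^2)^m * ys" "(B^2)^m * ys \<le> ys" using ys0
        using mult_right_mono[of "(B^2)^m" 1 ys] by auto
      then have "\<bar>Ym m\<bar> \<le> 2 * ys" unfolding Ym_def abs_le_iff using ys0 by linarith
      then show ?thesis using ys2 by linarith
    qed
    have inO: "vector [0, Ym m, p] \<in> Om" "G (vector [0, Ym m, p]) \<in> Om" for m
      using bnd[OF Ym4[of m]] bnd[OF bndG[OF Ym4[of m]]] G0 by auto
    have it: "((g ^^ K) ^^ m) P = iv (vector [0, Ym m, p])" for m
    proof (induction m)
      case 0 show ?case using P_eq by (simp add: Ym_def)
    next
      case (Suc m)
      have eqv: "vector [0, ys + B^2 * (Ym m - ys), p] = vector [0, Ym (Suc m), p]"
        unfolding Ym_def by (simp add: algebra_simps)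
      have k: "(g ^^ K) (iv (vector [0, Ym m, p])) = iv (vector [0, ys + B^2 * (Ym m - ys), p])"
        using KK[OF inO(1)[of m] inO(2)[of m]] GGf by simp
      show ?case by (simp only: funpow.simps comp_apply Suc.IH k eqv)
    qed
    have lim1: "(\<lambda>m. vector [0, Ym m, p]) \<longlonglongrightarrow> Y0"
    proof -
      have "(\<lambda>m. (B^2)^m) \<longlonglongrightarrow> 0" using Bs by (intro LIMSEQ_power_zero) (simp add: abs_square_less_1)
      from tendsto_minus[OF tendsto_mult_left_zero[OF this, of ys]]
      have s0: "(\<lambda>m. - ((B^2)^m * ys)) \<longlonglongrightarrow> 0" by simp
      have eq: "(\<lambda>m. vector [0, Ym m, p]) = (\<lambda>m. Y0 + (- ((B^2)^m * ys)) *\<^sub>R axis 2 1)"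
        unfolding Y0_def Ym_def by (simp add: fun_eq_iff vec_eq_iff forall_3 axis_def)
      show ?thesis unfolding eq by (rule vec_lim_axis[OF s0])
    qed
    have "(\<lambda>m. iv (vector [0, Ym m, p])) \<longlonglongrightarrow> iv Y0"
      by (rule continuous_on_tendsto_compose[OF civ lim1 Y0U]) (use inO OmU in auto)
    then have "P \<in> Ws_point (g ^^ K) Y" by (simp add: Ws_point_def Y_def it)
    then show ?thesis unfolding Ws_orbit_def using Yorb by blast
  qed
  have PWu: "P \<in> Wu_point g X"
  proof -
    have it: "(inv g ^^ m) P = iv (vector [0, 0, p / \<mu> ^ m])" for m
    proof (induction m)
      case 0 show ?case using P_eq by simp
    next
      case (Suc m)
      define v where "v = (vector [0, 0, p / \<mu> ^ Suc m] :: real^3)"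
      have "(g ^^ 1) (iv v) = iv (vector [lam ^ 1 * v$1, lamt ^ 1 * v$2, \<mu> ^ 1 * v$3])"
      proof (rule S1)
        have "p / \<mu> ^ m \<le> p / 1" using pq lm by (intro divide_left_mono) auto
        then have "p / \<mu> ^ m < 1" using pq by simp
        then show "\<mu> ^ 1 * \<bar>v $ 3\<bar> < 1" using pq lm by (simp add: v_def)
      qed (simp_all add: v_def)
      then have "g (iv (vector [0, 0, p / \<mu> ^ Suc m])) = iv (vector [0, 0, p / \<mu> ^ m])"
        using lm by (simp add: v_def)
      then have "inv g (iv (vector [0, 0, p / \<mu> ^ m])) = iv (vector [0, 0, p / \<mu> ^ Suc m])"
        by (metis injg inv_f_f)
      then show ?case using Suc by simp
    qed
    have s0: "(\<lambda>m. (1/\<mu>)^m * p) \<longlonglongrightarrow> 0" using lm by (intro tendsto_mult_left_zero LIMSEQ_power_zero) auto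
    have eq: "(\<lambda>m. vector [0, 0, p / \<mu> ^ m]) = (\<lambda>m. (0::real^3) + ((1/\<mu>)^m * p) *\<^sub>R axis 3 1)"
      by (simp add: fun_eq_iff vec_eq_iff forall_3 axis_def power_one_over)
    have lim: "(\<lambda>m. vector [0, 0, p / \<mu> ^ m]) \<longlonglongrightarrow> (0::real^3)"
      unfolding eq by (rule vec_lim_axis[OF s0])
    have pU: "vector [0, 0, p / \<mu> ^ m] \<in> \<phi> ` U" for m
    proof (rule cube)
      have "p / \<mu> ^ m \<le> p / 1" using pq lm by (intro divide_left_mono) auto
      then have "p / \<mu> ^ m \<le> p" by simp
      moreover have "\<bar>vector [0, 0, p / \<mu> ^ m] $ (3::3)\<bar> = p / \<mu> ^ m" using pq lm by simp
      ultimately show "\<bar>vector [0, 0, p / \<mu> ^ m] $ (3::3)\<bar> < 1" using pq by linarith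
    qed simp_all
    have "0 \<in> \<phi> ` U" using DT2(3,4) by force
    from continuous_on_tendsto_compose[OF civ lim this] pU
    have "(\<lambda>m. iv (vector [0, 0, p / \<mu> ^ m])) \<longlonglongrightarrow> iv 0" by simp
    moreover have "iv 0 = X" using ii'[OF DT2(3)] DT2(4) by simp
    ultimately show ?thesis by (simp add: Wu_point_def Ws_point_def it)
  qed
  define Z where "Z j = (vector [- \<tau> / (c * E ^ j), ys, p] :: real^3)" for j
  have Zfacts: "Z (Suc j) \<in> Om \<and> G (Z (Suc j)) \<in> Om \<and> G (G (Z (Suc j))) = Z j" for j
  proof -
    define F where "F = E ^ Suc j"
    have F1: "\<bar>F\<bar> \<ge> \<bar>E\<bar>"
    proof -
      have "\<bar>E\<bar> ^ 1 \<le> \<bar>E\<bar> ^ Suc j" using E1 by (intro power_increasing) auto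
      then show ?thesis unfolding F_def power_abs by simp
    qed
    have FE: "\<bar>F\<bar> > Emin" using F1 Ebig by linarith
    have F0: "F \<noteq> 0" "\<bar>F\<bar> > 1" using F1 E1 by auto
    have c0: "c \<noteq> 0" using abc by simp
    have ZS: "Z (Suc j) = vector [- \<tau> / (c * F), ys, p]" unfolding Z_def F_def ..
    have GZ: "G (Z (Suc j)) = vector [0, ys, p - p / F]"
      unfolding ZS G_def using ysB mtau c0 F0 unfolding C_def by (simp add: vec_eq_iff forall_3 field_simps)
    have x1: "\<bar>- \<tau> / (c * F)\<bar> < e0"
    proof -
      have "\<bar>- \<tau> / (c * F)\<bar> = \<tau> / \<bar>c\<bar> / \<bar>F\<bar>" using tpos by (simp add: abs_mult)
      also have "\<dots> \<le> \<tau> / \<bar>c\<bar>" using F0 tpos c0 by (simp add: divide_le_eq)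
      also have "\<dots> < e0" using tle(3) c0 by (simp add: divide_less_eq mult.commute)
      finally show ?thesis .
    qed
    have pF: "p / \<bar>F\<bar> < 1 - p" "p / \<bar>F\<bar> < e0" "\<bar>a\<bar> * p / \<bar>F\<bar> < 1"
    proof -
      have "p / (1 - p) < \<bar>F\<bar>" "p / e0 < \<bar>F\<bar>" "\<bar>a\<bar> * p < \<bar>F\<bar>" using FE Emin_ge by linarith+
      then show "p / \<bar>F\<bar> < 1 - p" "p / \<bar>F\<bar> < e0" "\<bar>a\<bar> * p / \<bar>F\<bar> < 1"
        using pq e0(1) F0 by (simp_all add: field_simps)
    qed
    have z3: "\<mu> ^ n * \<bar>c * (- \<tau> / (c * F)) + \<tau>\<bar> < 1"
    proof -
      have "\<mu> ^ n * (c * (- \<tau> / (c * F)) + \<tau>) = p - p / F" using mtau c0 F0 by (simp add: field_simps)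
      then have "\<mu> ^ n * \<bar>c * (- \<tau> / (c * F)) + \<tau>\<bar> = \<bar>p - p / F\<bar>" using mun by (metis abs_mult abs_of_pos)
      also have "\<dots> \<le> p + p / \<bar>F\<bar>" using abs_triangle_ineq4[of p "p / F"] pq by (simp add: abs_divide)
      finally show ?thesis using pF(1) by linarith
    qed
    have yb: "\<bar>b * ys + q\<bar> < 1" using bnd[OF ys4] unfolding Om_def by simp
    have m1: "Z (Suc j) \<in> Om" unfolding ZS Om_def using x1 ys4 e4 yb z3 by simp
    have m2: "G (Z (Suc j)) \<in> Om" unfolding GZ Om_def using ys4 e4 yb pF mtau pq e0(1) tpos
      by (simp add: abs_mult) 
    have m3: "G (G (Z (Suc j))) = Z j"
      unfolding GZ GGf Z_def F_def using F0 c0 E1 by (simp add: vec_eq_iff forall_3 field_simps)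
    show ?thesis using m1 m2 m3 by simp
  qed
  define W where "W = iv (Z 0)"
  have injK: "inj (g ^^ K)" using inj_fn[OF injg] .
  have WWu: "W \<in> Wu_orbit g K Y"
  proof -
    have it: "(inv (g ^^ K) ^^ j) W = iv (Z j)" for j
    proof (induction j)
      case 0 show ?case unfolding W_def by simp
    next
      case (Suc j)
      have "(g ^^ K) (iv (Z (Suc j))) = iv (Z j)" using KK Zfacts[of j] by simp
      then have "inv (g ^^ K) (iv (Z j)) = iv (Z (Suc j))" by (metis injK inv_f_f)
      then show ?case using Suc by simp
    qed
    have lim: "Z \<longlonglongrightarrow> Y0"
    proof -
      have "\<bar>1 / E\<bar> < 1" using E1 by simp
      then have s0: "(\<lambda>j. (-\<tau> / c) * (1/E)^j) \<longlonglongrightarrow> 0" by (intro tendsto_mult_right_zero LIMSEQ_power_zero) auto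
      have eq: "Z = (\<lambda>j. Y0 + ((-\<tau> / c) * (1/E)^j) *\<^sub>R axis 1 1)"
        unfolding Y0_def Z_def by (simp add: fun_eq_iff vec_eq_iff forall_3 axis_def power_one_over)
      show ?thesis unfolding eq by (rule vec_lim_axis[OF s0])
    qed
    have ev: "eventually (\<lambda>j. Z j \<in> \<phi> ` U) sequentially"
    proof (rule eventually_sequentiallyI[of 1])
      fix j :: nat assume "1 \<le> j"
      then obtain i where "j = Suc i" by (cases j) auto
      then show "Z j \<in> \<phi> ` U" using Zfacts[of i] OmU by simp
    qed
    have "(\<lambda>j. iv (Z j)) \<longlonglongrightarrow> iv Y0"
      by (rule continuous_on_tendsto_compose[OF civ lim Y0U ev])
    then have "W \<in> Wu_point (g ^^ K) Y" by (simp add: Wu_point_def Ws_point_def Y_def it)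
    then show ?thesis unfolding Wu_orbit_def using Yorb by blast
  qed
  have WWs: "W \<in> Ws_point g X"
  proof -
    define y1 where "y1 = b * ys + q"
    have y1b: "\<bar>y1\<bar> < 1" using bnd[OF ys4] unfolding Om_def y1_def by simp
    have c0: "c \<noteq> 0" using abc by simp
    have xw: "\<bar>- \<tau> / c\<bar> \<le> e0" using tle(3) c0 tpos by (simp add: divide_le_eq mult.commute)
    have Z0: "Z 0 = vector [- \<tau> / c, ys, 0 + p]" unfolding Z_def by simp
    have h5: "(g ^^ N) W \<in> U \<and> \<phi> ((g ^^ N) W) = vector [a * 0, b * ys + q, c * (- \<tau> / c) + \<tau>]"
      unfolding W_def Z0 g_def iv_def
      by (rule e0(3)[OF tabs xw]) (use ys4 e4 e0(1) in auto)
    then have gN: "(g ^^ N) W = iv (vector [0, y1, 0])" using ii' c0 unfolding y1_def by (metis add.commute add_0 mult_zero_right neg_eq_iff_add_eq_0 nonzero_mult_div_cancel_left times_divide_eq_right)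
    have it: "(g ^^ (m + N)) W = iv (vector [0, lamt ^ m * y1, 0])" for m
    proof -
      define v where "v = (vector [0, y1, 0] :: real^3)"
      have "(g ^^ m) (iv v) = iv (vector [lam ^ m * v$1, lamt ^ m * v$2, \<mu> ^ m * v$3])"
        by (rule S1) (use y1b in \<open>simp_all add: v_def\<close>)
      then have "(g ^^ m) (iv (vector [0, y1, 0])) = iv (vector [0, lamt ^ m * y1, 0])"
        by (simp add: v_def)
      then show ?thesis using gN by (simp add: funpow_add)
    qed
    have s0: "(\<lambda>m. lamt ^ m * y1) \<longlonglongrightarrow> 0" using lm by (intro tendsto_mult_left_zero LIMSEQ_power_zero) auto
    have eq: "(\<lambda>m. vector [0, lamt ^ m * y1, 0]) = (\<lambda>m. (0::real^3) + (lamt ^ m * y1) *\<^sub>R axis 2 1)"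
      by (simp add: fun_eq_iff vec_eq_iff forall_3 axis_def)
    have lim: "(\<lambda>m. vector [0, lamt ^ m * y1, 0]) \<longlonglongrightarrow> (0::real^3)"
      unfolding eq by (rule vec_lim_axis[OF s0])
    have pU: "vector [0, lamt ^ m * y1, 0] \<in> \<phi> ` U" for m
      by (rule cube) (use small_mult[of "lamt ^ m" y1] lm y1b in \<open>simp_all add: power_le_one\<close>)
    have "0 \<in> \<phi> ` U" using DT2(3,4) by force
    from continuous_on_tendsto_compose[OF civ lim this] pU
    have "(\<lambda>m. iv (vector [0, lamt ^ m * y1, 0])) \<longlonglongrightarrow> iv 0" by simp
    moreover have "iv 0 = X" using ii'[OF DT2(3)] DT2(4) by simp
    ultimately have "(\<lambda>m. (g ^^ (m + N)) W) \<longlonglongrightarrow> X" unfolding it by simp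
    then show ?thesis unfolding Ws_point_def mem_Collect_eq by (rule LIMSEQ_offset)
  qed
  show ?thesis
  proof (intro exI conjI)
    show "0 < \<tau>" "\<tau> \<le> \<epsilon>" "\<tau> < \<delta>" using tpos tle by auto
    show "1 \<le> K" unfolding K_def using DT4(9) by simp
    show "(fam \<tau> ^^ K) Y = Y" using fixY g_def by simp
    show "hyperbolic_fixed_index A (fam \<tau> ^^ K) Y 2" using hyp g_def by simp
    show "Wu_point (fam \<tau>) X \<inter> Ws_orbit (fam \<tau>) K Y \<noteq> {}" using PWs PWu g_def by blast
    show "Ws_point (fam \<tau>) X \<inter> Wu_orbit (fam \<tau>) K Y \<noteq> {}" using WWs WWu g_def by blast
  qed
  qed
qed simp

end
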